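(* Let $F$ be a finite field with $q$ elements and $G$ a finite abelian group of order $m$. For any $(r,\delta)\in(0,1)\times(0,1-q^{-1})$ with $r<g_q(\delta)$, there exists a sequence of quasi-$FG$ codes $C_1,C_2,\dots$ such that: (i) the length of $C_i$ tends to infinity; (ii) $\lim_{i\to\infty}R(C_i)=r$; (iii) $\lim_{i\to\infty}\Delta(C_i)\ge\delta$.
   Context: A quasi-$FG$ code of index $n$ is an $FG$-submodule $C$ of $(FG)^n$, where $FG$ is the group algebra, each element $\sum_{z\in G}a_zz$ is identified with the word $(a_z)_{z\in G}\in F^m$ and elements of $(FG)^n$ with concatenated words of length $mn$ over $F$ (so $C$ has length $mn$). Its rate is $R(C)=\dim_F C/(mn)$ and its relative distance is $\Delta(C)=\mathrm{w}(C)/(mn)$, where $\mathrm{w}(C)$ is the minimum Hamming weight of the nonzero codewords. $h_q(x)=x\log_q(q-1)-x\log_q x-(1-x)\log_q(1-x)$ (with $0\log_q0=0$), $g_q(x)=1-h_q(x)$. *)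

theory Defs
  imports "HOL-Analysis.Analysis" "HOL-Library.Function_Algebras"
begin

text \<open>Group algebra FG: elements are functions G \<Rightarrow> F (coefficient vectors (a_z)_{z\<in>G}).
  The finite abelian group G is a finite type of class ab_group_add (written additively).\<close>

definition ga_mult :: "('g::{ab_group_add,finite} \<Rightarrow> 'f::field) \<Rightarrow> ('g \<Rightarrow> 'f) \<Rightarrow> ('g \<Rightarrow> 'f)" where
  "ga_mult a b = (\<lambda>z. \<Sum>x\<in>UNIV. a x * b (z - x))"

text \<open>Elements of (FG)^n: functions c :: nat \<Rightarrow> G \<Rightarrow> F with c j = 0 for j \<ge> n.\<close>

definition words :: "nat \<Rightarrow> (nat \<Rightarrow> 'g \<Rightarrow> 'f::zero) set" where
  "words n = {c. \<forall>j\<ge>n. c j = (\<lambda>_. 0)}"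

definition quasi_FG_code :: "nat \<Rightarrow> (nat \<Rightarrow> 'g::{ab_group_add,finite} \<Rightarrow> 'f::field) set \<Rightarrow> bool" where
  "quasi_FG_code n C \<longleftrightarrow> C \<subseteq> words n \<and> (\<lambda>_ _. 0) \<in> C \<and>
     (\<forall>c\<in>C. \<forall>d\<in>C. (\<lambda>j z. c j z + d j z) \<in> C) \<and>
     (\<forall>a. \<forall>c\<in>C. (\<lambda>j. ga_mult a (c j)) \<in> C)"

definition word_scale :: "'f::field \<Rightarrow> (nat \<Rightarrow> 'g \<Rightarrow> 'f) \<Rightarrow> (nat \<Rightarrow> 'g \<Rightarrow> 'f)" where
  "word_scale s c = (\<lambda>j z. s * c j z)"

definition dimF :: "(nat \<Rightarrow> 'g \<Rightarrow> 'f::field) set \<Rightarrow> nat" where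
  "dimF C = vector_space.dim (word_scale :: 'f \<Rightarrow> _) C"

definition hweight :: "nat \<Rightarrow> (nat \<Rightarrow> 'g::finite \<Rightarrow> 'f::zero) \<Rightarrow> nat" where
  "hweight n c = card {(j, z). j < n \<and> c j z \<noteq> 0}"

definition min_weight :: "nat \<Rightarrow> (nat \<Rightarrow> 'g::finite \<Rightarrow> 'f::zero) set \<Rightarrow> nat" where
  "min_weight n C = Min {hweight n c | c. c \<in> C \<and> c \<noteq> (\<lambda>_ _. 0)}"

definition code_rate :: "nat \<Rightarrow> (nat \<Rightarrow> 'g::{ab_group_add,finite} \<Rightarrow> 'f::field) set \<Rightarrow> real" where
  "code_rate n C = real (dimF C) / (real CARD('g) * real n)"

definition rel_dist :: "nat \<Rightarrow> (nat \<Rightarrow> 'g::{ab_group_add,finite} \<Rightarrow> 'f::field) set \<Rightarrow> real" where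
  "rel_dist n C = real (min_weight n C) / (real CARD('g) * real n)"

definition xlogx :: "real \<Rightarrow> real \<Rightarrow> real" where
  "xlogx q x = (if x = 0 then 0 else x * log q x)"

definition hq :: "real \<Rightarrow> real \<Rightarrow> real" where
  "hq q x = x * log q (q - 1) - xlogx q x - xlogx q (1 - x)"

definition gq :: "real \<Rightarrow> real \<Rightarrow> real" where
  "gq q x = 1 - hq q x"

end

theory Submission
  imports Defs
begin

lemma sum_fun_apply: "(\<Sum>i\<in>A. f i) x = (\<Sum>i\<in>A. f i x)"
  by (induction A rule: infinite_finite_induct) auto

lemma ga_mult_add_left: "ga_mult (a + b) c = ga_mult a c + ga_mult b c"
  by (auto simp: ga_mult_def fun_eq_iff distrib_right sum.distrib)

lemma ga_mult_add_right: "ga_mult a (b + c) = ga_mult a b + ga_mult a c"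
  by (auto simp: ga_mult_def fun_eq_iff distrib_left sum.distrib)

lemma ga_mult_zero_left[simp]: "ga_mult 0 c = 0" "ga_mult (\<lambda>_. 0) c = 0"
  by (auto simp: ga_mult_def fun_eq_iff)

lemma ga_mult_zero_right[simp]: "ga_mult a 0 = 0" "ga_mult a (\<lambda>_. 0) = 0"
  by (auto simp: ga_mult_def fun_eq_iff)

lemma ga_mult_sum_left: "ga_mult (\<Sum>i\<in>A. f i) c = (\<Sum>i\<in>A. ga_mult (f i) c)"
proof (rule ext)
  fix z
  have "ga_mult (\<Sum>i\<in>A. f i) c z = (\<Sum>x\<in>UNIV. \<Sum>i\<in>A. f i x * c (z - x))"
    by (simp add: ga_mult_def sum_fun_apply sum_distrib_right)
  also have "\<dots> = (\<Sum>i\<in>A. \<Sum>x\<in>UNIV. f i x * c (z - x))" by (rule sum.swap)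
  also have "\<dots> = (\<Sum>i\<in>A. ga_mult (f i) c) z" by (simp add: ga_mult_def sum_fun_apply)
  finally show "ga_mult (\<Sum>i\<in>A. f i) c z = (\<Sum>i\<in>A. ga_mult (f i) c) z" .
qed

lemma ga_mult_sum_right: "ga_mult a (\<Sum>i\<in>A. f i) = (\<Sum>i\<in>A. ga_mult a (f i))"
proof (rule ext)
  fix z
  have "ga_mult a (\<Sum>i\<in>A. f i) z = (\<Sum>x\<in>UNIV. \<Sum>i\<in>A. a x * f i (z - x))"
    by (simp add: ga_mult_def sum_fun_apply sum_distrib_left)
  also have "\<dots> = (\<Sum>i\<in>A. \<Sum>x\<in>UNIV. a x * f i (z - x))" by (rule sum.swap)
  also have "\<dots> = (\<Sum>i\<in>A. ga_mult a (f i)) z" by (simp add: ga_mult_def sum_fun_apply)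
  finally show "ga_mult a (\<Sum>i\<in>A. f i) z = (\<Sum>i\<in>A. ga_mult a (f i)) z" .
qed

lemma ga_mult_scale_left: "ga_mult (\<lambda>z. s * a z) c = (\<lambda>z. s * ga_mult a c z)"
  by (auto simp: ga_mult_def fun_eq_iff sum_distrib_left mult.assoc)

lemma ga_mult_scale_right: "ga_mult a (\<lambda>z. s * c z) = (\<lambda>z. s * ga_mult a c z)"
  by (auto simp: ga_mult_def fun_eq_iff sum_distrib_left mult.left_commute)

lemma ga_mult_assoc: "ga_mult a (ga_mult b c) = ga_mult (ga_mult a b) c"
proof -
  have "ga_mult a (ga_mult b c) z = ga_mult (ga_mult a b) c z" for z
  proof -
    have "ga_mult a (ga_mult b c) z = (\<Sum>x\<in>UNIV. \<Sum>y\<in>UNIV. a x * (b y * c (z - x - y)))"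
      by (simp add: ga_mult_def sum_distrib_left)
    also have "\<dots> = (\<Sum>x\<in>UNIV. \<Sum>w\<in>UNIV. a x * (b (w - x) * c (z - w)))"
    proof (rule sum.cong[OF refl])
      fix x
      show "(\<Sum>y\<in>UNIV. a x * (b y * c (z - x - y))) = (\<Sum>w\<in>UNIV. a x * (b (w - x) * c (z - w)))"
        by (rule sum.reindex_bij_witness[of _ "\<lambda>w. w - x" "\<lambda>y. y + x"]) (auto simp: algebra_simps)
    qed
    also have "\<dots> = (\<Sum>w\<in>UNIV. \<Sum>x\<in>UNIV. a x * (b (w - x) * c (z - w)))"
      by (rule sum.swap)
    also have "\<dots> = ga_mult (ga_mult a b) c z"
      by (simp add: ga_mult_def sum_distrib_right mult.assoc)
    finally show ?thesis .
  qed
  then show ?thesis by auto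
qed

definition unitg :: "'g::ab_group_add \<Rightarrow> 'f::field" where "unitg = (\<lambda>z. if z = 0 then 1 else 0)"

lemma ga_mult_unit: "ga_mult a unitg = a"
proof -
  have "ga_mult a unitg z = a z" for z
  proof -
    have "ga_mult a unitg z = (\<Sum>x\<in>UNIV. if x = z then a x else 0)"
      unfolding ga_mult_def unitg_def by (rule sum.cong) auto
    then show ?thesis by simp
  qed
  then show ?thesis by auto
qed

definition shiftf :: "'g::ab_group_add \<Rightarrow> ('g \<Rightarrow> 'f) \<Rightarrow> ('g \<Rightarrow> 'f)" where
  "shiftf g x = (\<lambda>z. x (z - g))"

lemma ga_mult_shift: "shiftf g (ga_mult a c) = ga_mult a (shiftf g c)"
  by (auto simp: shiftf_def ga_mult_def fun_eq_iff algebra_simps)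

lemma shift_sum: "shiftf g (\<Sum>i\<in>A. f i) = (\<Sum>i\<in>A. shiftf g (f i))"
  by (simp add: fun_eq_iff shiftf_def sum_fun_apply)


lemma card_field_ge2: "CARD('f::{field,finite}) \<ge> 2"
proof -
  have "{0::'f, 1} \<subseteq> UNIV" by auto
  then have "card {0::'f, 1} \<le> CARD('f)" by (rule card_mono[OF finite_class.finite_UNIV])
  then show ?thesis by simp
qed

definition vb :: "real \<Rightarrow> real \<Rightarrow> real" where
  "vb q \<delta> = (\<delta> / (q - 1)) powr \<delta> * (1 - \<delta>) powr (1 - \<delta>)"

lemma vol_bound:
  fixes T :: "'a set" and \<delta> :: real
  assumes T: "finite T" and d0: "0 < \<delta>" and d1: "\<delta> \<le> 1 - 1 / real CARD('f::{field,finite})"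
  shows "real (card {w \<in> T \<rightarrow>\<^sub>E (UNIV::'f set). real (card {t\<in>T. w t \<noteq> 0}) \<le> \<delta> * card T})
           * (vb (real CARD('f)) \<delta>) ^ card T \<le> 1"
proof -
  define q where "q = real CARD('f)"
  have q2: "q \<ge> 2" using card_field_ge2[where 'f='f] unfolding q_def by simp
  define a where "a = \<delta> / (q - 1)"
  define b where "b = 1 - \<delta>"
  have d1': "\<delta> \<le> 1 - 1/q" using d1 q_def by simp
  have "1/q > 0" using q2 by simp
  then have dlt1: "\<delta> < 1" using d1' by linarith
  have a0: "a > 0" using d0 q2 by (simp add: a_def)
  have b0: "b > 0" using dlt1 by (simp add: b_def)
  have ab: "a \<le> b"
  proof -
    have "\<delta> * q \<le> q - 1" using d1' q2 by (simp add: field_simps)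
    then have "\<delta> \<le> (1 - \<delta>) * (q - 1)" by (simp add: algebra_simps)
    then show ?thesis using q2 by (simp add: a_def b_def field_simps)
  qed
  define f where "f = (\<lambda>v::'f. if v = 0 then b else a)"
  have sumf: "(\<Sum>v\<in>UNIV. f v) = 1"
  proof -
    have "(\<Sum>v\<in>UNIV. f v) = f 0 + (\<Sum>v\<in>UNIV - {0}. f v)"
      by (simp add: sum.remove)
    also have "(\<Sum>v\<in>UNIV - {0}. f v) = (\<Sum>v::'f\<in>UNIV - {0}. a)"
      by (rule sum.cong) (auto simp: f_def)
    also have "\<dots> = (q - 1) * a" by (simp add: q_def card_Diff_singleton)
    finally show ?thesis using q2 by (simp add: f_def a_def b_def)
  qed
  define L where "L = {w \<in> T \<rightarrow>\<^sub>E (UNIV::'f set). real (card {t\<in>T. w t \<noteq> 0}) \<le> \<delta> * card T}"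
  define \<beta> where "\<beta> = vb q \<delta>"
  have beta: "\<beta> = a powr \<delta> * b powr (1 - \<delta>)" by (simp add: \<beta>_def vb_def a_def b_def)
  have b0': "\<beta> > 0" using a0 b0 beta by simp
  have 1: "(\<Sum>w\<in>T \<rightarrow>\<^sub>E (UNIV::'f set). \<Prod>t\<in>T. f (w t)) = 1"
    using prod_sum_PiE[OF T, of "\<lambda>_. UNIV" "\<lambda>_ v. f v"] sumf by simp
  have low: "\<beta> ^ card T \<le> (\<Prod>t\<in>T. f (w t))" if "w \<in> L" for w
  proof -
    define c where "c = card {t\<in>T. w t \<noteq> 0}"
    have cle: "real c \<le> \<delta> * card T" using that by (simp add: L_def c_def)
    have "(\<Prod>t\<in>T. f (w t)) = (\<Prod>t\<in>T \<inter> {t. w t = 0}. b) * (\<Prod>t\<in>T \<inter> - {t. w t = 0}. a)"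
      unfolding f_def by (rule prod.If_cases[OF T])
    also have "\<dots> = b ^ (card T - c) * a ^ c"
    proof -
      have e1: "T \<inter> - {t. w t = 0} = {t\<in>T. w t \<noteq> 0}" by auto
      have e2: "T \<inter> {t. w t = 0} = T - {t\<in>T. w t \<noteq> 0}" by auto
      have "card (T - {t\<in>T. w t \<noteq> 0}) = card T - c"
        unfolding c_def by (rule card_Diff_subset) (use T in auto)
      then show ?thesis using e1 e2 by (simp add: c_def)
    qed
    finally have P: "(\<Prod>t\<in>T. f (w t)) = b ^ (card T - c) * a ^ c" .
    have cT: "c \<le> card T" unfolding c_def by (rule card_mono[OF T]) auto
    have "ln (\<beta> ^ card T) = card T * (\<delta> * ln a + (1 - \<delta>) * ln b)"
      using a0 b0 by (simp add: beta ln_realpow ln_mult ln_powr)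
    also have "\<dots> \<le> real c * ln a + (real (card T) - real c) * ln b"
    proof -
      have lab: "ln a \<le> ln b" using a0 ab by simp
      have "(\<delta> * card T - c) * (ln b - ln a) \<ge> 0" using cle lab by simp
      then show ?thesis by (simp add: algebra_simps)
    qed
    also have "\<dots> = ln (b ^ (card T - c) * a ^ c)"
      using a0 b0 cT by (simp add: ln_mult ln_realpow of_nat_diff)
    finally have "ln (\<beta> ^ card T) \<le> ln (b ^ (card T - c) * a ^ c)" .
    then have "\<beta> ^ card T \<le> b ^ (card T - c) * a ^ c"
      using a0 b0 b0' by (subst (asm) ln_le_cancel_iff) auto
    then show ?thesis using P by simp
  qed
  have Lsub: "L \<subseteq> T \<rightarrow>\<^sub>E (UNIV::'f set)" by (auto simp: L_def)
  have finPi: "finite (T \<rightarrow>\<^sub>E (UNIV::'f set))" using T by (simp add: finite_PiE)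
  have "real (card L) * \<beta> ^ card T = (\<Sum>w\<in>L. \<beta> ^ card T)" by simp
  also have "\<dots> \<le> (\<Sum>w\<in>L. \<Prod>t\<in>T. f (w t))" by (rule sum_mono) (rule low)
  also have "\<dots> \<le> (\<Sum>w\<in>T \<rightarrow>\<^sub>E (UNIV::'f set). \<Prod>t\<in>T. f (w t))"
    by (rule sum_mono2[OF finPi Lsub]) (auto simp: f_def a0 b0 less_imp_le intro!: prod_nonneg)
  finally show ?thesis using 1 by (simp add: L_def \<beta>_def q_def)
qed

lemma info_set:
  fixes I :: "('g::finite \<Rightarrow> 'f::field) set"
  assumes I0: "0 \<in> I" and Iadd: "\<forall>x\<in>I. \<forall>y\<in>I. x + y \<in> I"
    and Iscale: "\<forall>x\<in>I. \<forall>s. (\<lambda>z. s * x z) \<in> I"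
  shows "\<exists>S. (\<forall>f. \<exists>x\<in>I. \<forall>s\<in>S. x s = f s) \<and> (\<forall>x\<in>I. \<forall>y\<in>I. (\<forall>s\<in>S. x s = y s) \<longrightarrow> x = y)"
proof -
  define P where "P = (\<lambda>S. \<forall>f. \<exists>x\<in>I. \<forall>s\<in>S. x s = f s)"
  define Q where "Q = (\<lambda>c. \<exists>S. P S \<and> card S = c)"
  have "Q 0" unfolding Q_def P_def using I0 by (intro exI[of _ "{}"]) auto
  moreover have "\<forall>c. Q c \<longrightarrow> c \<le> CARD('g)"
    unfolding Q_def using card_mono[OF finite_class.finite_UNIV] by auto
  ultimately obtain c where "Q c" and cmax: "\<forall>c'. Q c' \<longrightarrow> c' \<le> c"
    using Nat.ex_has_greatest_nat[of Q 0 "CARD('g)"] by blast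
  then obtain S where PS: "P S" and cS: "card S = c" unfolding Q_def by blast
  have "\<forall>x\<in>I. \<forall>y\<in>I. (\<forall>s\<in>S. x s = y s) \<longrightarrow> x = y"
  proof (intro ballI impI, rule ccontr)
    fix x y assume xI: "x \<in> I" and yI: "y \<in> I" and agree: "\<forall>s\<in>S. x s = y s" and ne: "x \<noteq> y"
    then obtain s0 where s0: "x s0 \<noteq> y s0" by auto
    then have s0S: "s0 \<notin> S" using agree by auto
    define w where "w = (\<lambda>z. x z - y z)"
    have "(\<lambda>z. (-1) * y z) \<in> I" using Iscale yI by blast
    then have wI: "w \<in> I" using Iadd xI unfolding w_def by (force simp: plus_fun_def)
    have w0: "w s0 \<noteq> 0" using s0 by (simp add: w_def)
    have wS: "\<forall>s\<in>S. w s = 0" using agree by (simp add: w_def)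
    have "P (insert s0 S)"
      unfolding P_def
    proof
      fix f :: "'g \<Rightarrow> 'f"
      obtain x' where x'I: "x' \<in> I" and x'S: "\<forall>s\<in>S. x' s = f s" using PS unfolding P_def by blast
      define cc where "cc = (f s0 - x' s0) / w s0"
      have "(\<lambda>z. cc * w z) \<in> I" using Iscale wI by blast
      then have "x' + (\<lambda>z. cc * w z) \<in> I" using Iadd x'I by blast
      moreover have "\<forall>s\<in>insert s0 S. (x' + (\<lambda>z. cc * w z)) s = f s"
        using x'S wS w0 by (auto simp: cc_def)
      ultimately show "\<exists>x\<in>I. \<forall>s\<in>insert s0 S. x s = f s" by blast
    qed
    then have "Q (card (insert s0 S))" unfolding Q_def by blast
    then have "card (insert s0 S) \<le> c" using cmax by blast
    moreover have "card (insert s0 S) = c + 1" using s0S cS by simp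
    ultimately show False by simp
  qed
  then show ?thesis using PS unfolding P_def by blast
qed


definition vwords :: "('g \<Rightarrow> 'f::zero) set \<Rightarrow> nat \<Rightarrow> (nat \<Rightarrow> 'g \<Rightarrow> 'f) set" where
  "vwords I L = {y. (\<forall>j<L. y j \<in> I) \<and> (\<forall>j\<ge>L. y j = 0)}"

lemma finite_vwords: "finite (vwords (I :: ('g::finite \<Rightarrow> 'f::{zero,finite}) set) L)"
proof -
  have "vwords I L \<subseteq> {f. \<forall>x. (x \<in> {..<L} \<longrightarrow> f x \<in> UNIV) \<and> (x \<notin> {..<L} \<longrightarrow> f x = 0)}"
    by (auto simp: vwords_def)
  moreover have "finite {f. \<forall>x. (x \<in> {..<L} \<longrightarrow> f x \<in> (UNIV::('g\<Rightarrow>'f) set)) \<and> (x \<notin> {..<L} \<longrightarrow> f x = 0)}"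
    by (rule finite_set_of_finite_funs) auto
  ultimately show ?thesis by (rule finite_subset)
qed

lemma card_filter_eq: "finite A \<Longrightarrow> card {x\<in>A. P x} = (\<Sum>x\<in>A. if P x then 1 else 0)"
proof (induction A rule: finite_induct)
  case (insert a A)
  have "{x \<in> insert a A. P x} = (if P a then insert a {x\<in>A. P x} else {x\<in>A. P x})" by auto
  then show ?case using insert by simp
qed simp

lemma sum_prod_fst: "(\<Sum>t\<in>A\<times>B. f (fst t)) = (\<Sum>a\<in>A. \<Sum>b\<in>B. f a)"
  by (simp add: sum.cartesian_product split_def)

lemma hweight_sum: "hweight n x = (\<Sum>j<n. \<Sum>z\<in>UNIV. if x j z \<noteq> 0 then 1 else 0)"
proof -
  have "{(j, z). j < n \<and> x j z \<noteq> 0} = {t \<in> {..<n} \<times> UNIV. x (fst t) (snd t) \<noteq> 0}" by auto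
  then have "hweight n x = card {t \<in> {..<n} \<times> (UNIV::'a set). x (fst t) (snd t) \<noteq> 0}"
    by (simp add: hweight_def)
  also have "\<dots> = (\<Sum>t\<in>{..<n} \<times> (UNIV::'a set). if x (fst t) (snd t) \<noteq> 0 then 1 else 0)"
    by (rule card_filter_eq) simp
  also have "\<dots> = (\<Sum>j<n. \<Sum>z\<in>UNIV. if x j z \<noteq> 0 then 1 else 0)"
    by (simp add: sum.cartesian_product split_def)
  finally show ?thesis .
qed

lemma hweight_le: "hweight n (x :: nat \<Rightarrow> 'g::finite \<Rightarrow> 'f::zero) \<le> n * CARD('g)"
proof -
  have "hweight n x \<le> (\<Sum>j<n. \<Sum>z\<in>(UNIV::'g set). 1)"
    unfolding hweight_sum by (intro sum_mono) auto
  then show ?thesis by simp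
qed

lemma lowcount:
  fixes I :: "('g::{finite,ab_group_add} \<Rightarrow> 'f::{field,finite}) set"
  assumes info: "\<forall>f. \<exists>x\<in>I. \<forall>s\<in>S. x s = f s"
    and inj: "\<forall>x\<in>I. \<forall>y\<in>I. (\<forall>s\<in>S. x s = y s) \<longrightarrow> x = y"
    and shift: "\<forall>x\<in>I. \<forall>g. shiftf g x \<in> I"
    and d0: "0 < \<delta>" and d1: "\<delta> \<le> 1 - 1 / real CARD('f)"
  shows "real (card {x \<in> vwords I n. real (hweight n x) \<le> \<delta> * CARD('g) * n})
           * vb (real CARD('f)) \<delta> ^ (n * card S) \<le> CARD('g)"
proof -
  define T where "T = {..<n} \<times> S"
  have finT: "finite T" by (simp add: T_def)
  have cardT: "card T = n * card S" by (simp add: T_def card_cartesian_product)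
  define \<rho> :: "'g \<Rightarrow> (nat \<Rightarrow> 'g \<Rightarrow> 'f) \<Rightarrow> (nat \<times> 'g \<Rightarrow> 'f)" where "\<rho> = (\<lambda>g x. restrict (\<lambda>t. x (fst t) (g + snd t)) T)"
  define cnt :: "'g \<Rightarrow> (nat \<Rightarrow> 'g \<Rightarrow> 'f) \<Rightarrow> nat" where "cnt = (\<lambda>g x. card {t\<in>T. x (fst t) (g + snd t) \<noteq> 0})"
  define V where "V = {w \<in> T \<rightarrow>\<^sub>E (UNIV::'f set). real (card {t\<in>T. w t \<noteq> 0}) \<le> \<delta> * card T}"
  define Low where "Low = {x \<in> vwords I n. real (hweight n x) \<le> \<delta> * CARD('g) * n}"
  define Lg where "Lg = (\<lambda>g. {x \<in> vwords I n. real (cnt g x) \<le> \<delta> * card T})"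
  have injr: "inj_on (\<rho> g) (vwords I n)" for g
  proof (rule inj_onI)
    fix x y assume x: "x \<in> vwords I n" and y: "y \<in> vwords I n" and e: "\<rho> g x = \<rho> g y"
    show "x = y"
    proof (rule ext)
      fix j
      show "x j = y j"
      proof (cases "j < n")
        case True
        have xj: "x j \<in> I" and yj: "y j \<in> I" using x y True by (auto simp: vwords_def)
        have "\<forall>s\<in>S. shiftf (-g) (x j) s = shiftf (-g) (y j) s"
        proof
          fix s assume "s \<in> S"
          then have "(j, s) \<in> T" using True by (simp add: T_def)
          then have "\<rho> g x (j, s) = \<rho> g y (j, s)" using e by simp
          then show "shiftf (-g) (x j) s = shiftf (-g) (y j) s"
            using \<open>(j, s) \<in> T\<close> by (simp add: \<rho>_def shiftf_def add.commute)
        qed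
        then have "shiftf (-g) (x j) = shiftf (-g) (y j)"
          using inj shift xj yj by blast
        then have "\<And>z. shiftf (-g) (x j) (z - g) = shiftf (-g) (y j) (z - g)" by simp
        then show ?thesis by (auto simp: shiftf_def)
      next
        case False
        then show ?thesis using x y by (auto simp: vwords_def)
      qed
    qed
  qed
  have cnt_w: "card {t\<in>T. \<rho> g x t \<noteq> 0} = cnt g x" for g x
    unfolding cnt_def \<rho>_def by (rule arg_cong[where f=card]) auto
  have mapV: "\<rho> g ` Lg g \<subseteq> V" for g
    unfolding Lg_def V_def using cnt_w by (auto simp: \<rho>_def)
  have cardLg: "card (Lg g) \<le> card V" for g
  proof -
    have "card (Lg g) = card (\<rho> g ` Lg g)"
      by (rule card_image[symmetric], rule inj_on_subset[OF injr]) (auto simp: Lg_def)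
    also have "\<dots> \<le> card V"
      by (rule card_mono[OF _ mapV]) (simp add: V_def finT finite_PiE)
    finally show ?thesis .
  qed
  have sumcnt: "(\<Sum>g\<in>UNIV. cnt g x) = card S * hweight n x" for x
  proof -
    have "(\<Sum>g\<in>UNIV. cnt g x) = (\<Sum>g\<in>UNIV. \<Sum>t\<in>T. if x (fst t) (g + snd t) \<noteq> 0 then 1 else 0)"
      unfolding cnt_def by (simp add: card_filter_eq[OF finT])
    also have "\<dots> = (\<Sum>t\<in>T. \<Sum>g\<in>UNIV. if x (fst t) (g + snd t) \<noteq> 0 then 1 else 0)"
      by (rule sum.swap)
    also have "\<dots> = (\<Sum>t\<in>T. \<Sum>z\<in>UNIV. if x (fst t) z \<noteq> 0 then 1 else 0)"
    proof (rule sum.cong[OF refl])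
      fix t
      show "(\<Sum>g\<in>UNIV. if x (fst t) (g + snd t) \<noteq> 0 then 1 else 0) =
            (\<Sum>z\<in>UNIV. if x (fst t) z \<noteq> 0 then 1 else (0::nat))"
        by (rule sum.reindex_bij_witness[of _ "\<lambda>z. z - snd t" "\<lambda>g. g + snd t"]) auto
    qed
    also have "\<dots> = (\<Sum>j<n. \<Sum>s\<in>S. \<Sum>z\<in>UNIV. if x j z \<noteq> 0 then 1 else 0)"
      unfolding T_def by (rule sum_prod_fst)
    also have "\<dots> = card S * hweight n x"
      by (simp add: hweight_sum sum_distrib_left)
    finally show ?thesis .
  qed
  have LowU: "Low \<subseteq> (\<Union>g. Lg g)"
  proof
    fix x assume xL: "x \<in> Low"
    show "x \<in> (\<Union>g. Lg g)"
    proof (rule ccontr)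
      assume "x \<notin> (\<Union>g. Lg g)"
      then have big: "\<And>g. \<delta> * card T < real (cnt g x)" using xL by (auto simp: Lg_def Low_def not_le)
      have "(\<Sum>g\<in>(UNIV::'g set). \<delta> * card T) < (\<Sum>g\<in>UNIV. real (cnt g x))"
        by (rule sum_strict_mono) (auto intro: big)
      also have "\<dots> = real (card S) * real (hweight n x)"
        proof -
        have "(\<Sum>g\<in>UNIV. real (cnt g x)) = real (\<Sum>g\<in>UNIV. cnt g x)" by simp
        then show ?thesis using sumcnt[of x] by simp
      qed
      also have "\<dots> \<le> real (card S) * (\<delta> * CARD('g) * n)"
        using xL by (intro mult_left_mono) (auto simp: Low_def)
      finally show False by (simp add: cardT algebra_simps)
    qed
  qed
  have "card Low \<le> card (\<Union>g. Lg g)"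
    by (rule card_mono[OF _ LowU]) (auto simp: Lg_def intro: finite_subset[OF _ finite_vwords])
  also have "\<dots> \<le> (\<Sum>g\<in>UNIV. card (Lg g))" by (rule card_UN_le) simp
  also have "\<dots> \<le> (\<Sum>g\<in>(UNIV::'g set). card V)" by (rule sum_mono) (rule cardLg)
  also have "\<dots> = CARD('g) * card V" by simp
  finally have cL0: "card Low \<le> CARD('g) * card V" .
  have cL: "real (card Low) \<le> real CARD('g) * real (card V)"
    using cL0 by (simp only: of_nat_mult[symmetric] of_nat_le_iff)
  have vb0: "vb (real CARD('f)) \<delta> ^ (n * card S) \<ge> 0"
  proof -
    have "vb (real CARD('f)) \<delta> \<ge> 0" by (simp add: vb_def)
    then show ?thesis by simp
  qed
  have "real (card Low) * vb (real CARD('f)) \<delta> ^ (n * card S)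
        \<le> real CARD('g) * real (card V) * vb (real CARD('f)) \<delta> ^ (n * card S)"
    by (rule mult_right_mono[OF cL vb0])
  also have "\<dots> \<le> real CARD('g) * 1"
    using vol_bound[OF finT d0 d1] unfolding V_def cardT[symmetric]
    by (simp add: mult.assoc)
  finally show ?thesis by (simp add: Low_def)
qed


lemma ga_mult_diff_right: "ga_mult a (b - c) = ga_mult a b - ga_mult a c"
  by (auto simp: ga_mult_def fun_eq_iff right_diff_distrib sum_subtractf)

definition cat :: "nat \<Rightarrow> (nat \<Rightarrow> 'a) \<Rightarrow> (nat \<Rightarrow> 'a) \<Rightarrow> (nat \<Rightarrow> 'a)" where
  "cat k u y = (\<lambda>j. if j < k then u j else y (j - k))"

definition phi :: "nat \<Rightarrow> nat \<Rightarrow> (nat \<Rightarrow> 'g::{ab_group_add,finite} \<Rightarrow> 'f::field) \<Rightarrow> (nat \<Rightarrow> nat \<Rightarrow> 'g \<Rightarrow> 'f) \<Rightarrow> (nat \<Rightarrow> 'g \<Rightarrow> 'f)" where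
  "phi k N u A = (\<lambda>j. if j < N then (\<Sum>i<k. ga_mult (u i) (A i j)) else 0)"

definition enc :: "nat \<Rightarrow> nat \<Rightarrow> (nat \<Rightarrow> nat \<Rightarrow> 'g::{ab_group_add,finite} \<Rightarrow> 'f::field) \<Rightarrow> (nat \<Rightarrow> 'g \<Rightarrow> 'f) \<Rightarrow> (nat \<Rightarrow> 'g \<Rightarrow> 'f)" where
  "enc k N A u = cat k u (phi k N u A)"

definition ideal_of :: "nat \<Rightarrow> (nat \<Rightarrow> 'g::{ab_group_add,finite} \<Rightarrow> 'f::field) \<Rightarrow> ('g \<Rightarrow> 'f) set" where
  "ideal_of k u = {(\<Sum>i<k. ga_mult (u i) (a i)) | a. True}"

definition Aset :: "nat \<Rightarrow> nat \<Rightarrow> (nat \<Rightarrow> nat \<Rightarrow> 'g \<Rightarrow> 'f::zero) set" where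
  "Aset k N = {A. \<forall>i. (i < k \<longrightarrow> A i \<in> words N) \<and> (k \<le> i \<longrightarrow> A i = 0)}"

lemma words_vwords: "words L = vwords UNIV L"
  by (auto simp: words_def vwords_def zero_fun_def)

lemma finite_words: "finite (words L :: (nat \<Rightarrow> 'g::finite \<Rightarrow> 'f::{zero,finite}) set)"
  unfolding words_vwords by (rule finite_vwords)

lemma finite_Aset: "finite (Aset k N :: (nat \<Rightarrow> nat \<Rightarrow> 'g::finite \<Rightarrow> 'f::{zero,finite}) set)"
proof -
  have e: "(Aset k N :: (nat \<Rightarrow> nat \<Rightarrow> 'g \<Rightarrow> 'f) set) = {f. \<forall>x. (x \<in> {..<k} \<longrightarrow> f x \<in> (words N :: (nat \<Rightarrow> 'g \<Rightarrow> 'f) set)) \<and> (x \<notin> {..<k} \<longrightarrow> f x = 0)}"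
    unfolding Aset_def by (simp add: not_less)
  have fw: "finite (words N :: (nat \<Rightarrow> 'g \<Rightarrow> 'f) set)" by (rule finite_words)
  have "finite {f. \<forall>x. (x \<in> {..<k} \<longrightarrow> f x \<in> (words N :: (nat \<Rightarrow> 'g \<Rightarrow> 'f) set)) \<and> (x \<notin> {..<k} \<longrightarrow> f x = 0)}"
    by (rule finite_set_of_finite_funs[OF finite_lessThan fw])
  then show ?thesis using e by simp
qed

lemma ideal_ofI: "x = (\<Sum>i<k. ga_mult (u i) (a i)) \<Longrightarrow> x \<in> ideal_of k u"
  unfolding ideal_of_def by blast

lemma ideal_ofE: "x \<in> ideal_of k u \<Longrightarrow> \<exists>a. x = (\<Sum>i<k. ga_mult (u i) (a i))"
  unfolding ideal_of_def by blast

lemma ideal_zero: "0 \<in> ideal_of k u"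
proof -
  show ?thesis unfolding ideal_of_def
    by (rule CollectI, rule exI[of _ "\<lambda>_. 0"]) simp
qed

lemma ideal_add: "x \<in> ideal_of k u \<Longrightarrow> y \<in> ideal_of k u \<Longrightarrow> x + y \<in> ideal_of k u"
proof -
  assume xi: "x \<in> ideal_of k u" and yi: "y \<in> ideal_of k u"
  obtain a where "x = (\<Sum>i<k. ga_mult (u i) (a i))" using ideal_ofE[OF xi] by blast
  moreover obtain b where "y = (\<Sum>i<k. ga_mult (u i) (b i))" using ideal_ofE[OF yi] by blast
  ultimately have "x + y = (\<Sum>i<k. ga_mult (u i) ((a + b) i))"
    by (simp add: ga_mult_add_right sum.distrib)
  then show ?thesis by (rule ideal_ofI)
qed

lemma ideal_scale: "x \<in> ideal_of k u \<Longrightarrow> (\<lambda>z. s * x z) \<in> ideal_of k u"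
proof -
  assume "x \<in> ideal_of k u"
  then obtain a where x: "x = (\<Sum>i<k. ga_mult (u i) (a i))" by (blast dest: ideal_ofE)
  have "(\<lambda>z. s * x z) = (\<Sum>i<k. ga_mult (u i) (\<lambda>z. s * a i z))"
    by (simp add: x ga_mult_scale_right fun_eq_iff sum_fun_apply sum_distrib_left)
  then show ?thesis by (rule ideal_ofI)
qed

lemma ideal_shift: "x \<in> ideal_of k u \<Longrightarrow> shiftf g x \<in> ideal_of k u"
proof -
  assume "x \<in> ideal_of k u"
  then obtain a where x: "x = (\<Sum>i<k. ga_mult (u i) (a i))" by (blast dest: ideal_ofE)
  have "shiftf g x = (\<Sum>i<k. ga_mult (u i) (shiftf g (a i)))"
    by (simp add: x shift_sum ga_mult_shift)
  then show ?thesis by (rule ideal_ofI)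
qed

lemma ideal_mem: "i < k \<Longrightarrow> u i \<in> ideal_of k u"
proof -
  assume ik: "i < k"
  have "(\<Sum>i'<k. ga_mult (u i') ((\<lambda>i'. if i' = i then unitg else 0) i')) = (\<Sum>i'<k. if i' = i then u i else 0)"
    by (rule sum.cong) (auto simp: ga_mult_unit)
  also have "\<dots> = u i" using ik by simp
  finally have eq: "(\<Sum>i'<k. ga_mult (u i') ((\<lambda>i'. if i' = i then unitg else 0) i')) = u i" .
  show ?thesis unfolding ideal_of_def
    by (rule CollectI, rule exI[of _ "\<lambda>i'. if i' = i then unitg else 0"]) (use eq in simp)
qed

lemma fiber_card:
  fixes \<phi> :: "'a::ab_group_add \<Rightarrow> 'b::ab_group_add"
  assumes X: "finite X" and X0: "0 \<in> X" and Xd: "\<forall>a\<in>X. \<forall>b\<in>X. a - b \<in> X"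
    and Xa: "\<forall>a\<in>X. \<forall>b\<in>X. a + b \<in> X"
    and lin: "\<forall>a\<in>X. \<forall>b\<in>X. \<phi> (a - b) = \<phi> a - \<phi> b"
  shows "card {x\<in>X. P (\<phi> x)} * card (\<phi> ` X) = card X * card {y \<in> \<phi> ` X. P y}"
proof -
  define c where "c = card {x\<in>X. \<phi> x = 0}"
  have fib: "card {x\<in>X. \<phi> x = y} = c" if yy: "y \<in> \<phi> ` X" for y
  proof -
    obtain x0 where x0: "x0 \<in> X" "y = \<phi> x0" using yy by blast
    have "bij_betw (\<lambda>x. x - x0) {x\<in>X. \<phi> x = y} {x\<in>X. \<phi> x = 0}"
    proof (rule bij_betw_byWitness[where f'="\<lambda>x. x + x0"])
      show "\<forall>a\<in>{x \<in> X. \<phi> x = y}. a - x0 + x0 = a" by simp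
      show "\<forall>a'\<in>{x \<in> X. \<phi> x = 0}. a' + x0 - x0 = a'" by simp
      show "(\<lambda>x. x - x0) ` {x \<in> X. \<phi> x = y} \<subseteq> {x \<in> X. \<phi> x = 0}"
        using Xd lin x0 by auto
      show "(\<lambda>x. x + x0) ` {x \<in> X. \<phi> x = 0} \<subseteq> {x \<in> X. \<phi> x = y}"
      proof
        fix z assume "z \<in> (\<lambda>x. x + x0) ` {x \<in> X. \<phi> x = 0}"
        then obtain x where x: "x \<in> X" "\<phi> x = 0" "z = x + x0" by auto
        have zX: "z \<in> X" using Xa x x0 by auto
        have "\<phi> x = \<phi> (z - x0)" using x by simp
        also have "\<dots> = \<phi> z - \<phi> x0" using lin zX x0 by auto
        finally have "\<phi> z = y" using x x0 by simp
        then show "z \<in> {x \<in> X. \<phi> x = y}" using zX by simp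
      qed
    qed
    then show ?thesis unfolding c_def by (rule bij_betw_same_card)
  qed
  have gen: "card {x\<in>X. Q (\<phi> x)} = c * card {y \<in> \<phi> ` X. Q y}" for Q
  proof -
    have fS: "finite {x\<in>X. Q (\<phi> x)}" using X by simp
    have "card {x\<in>X. Q (\<phi> x)} = (\<Sum>x\<in>{x\<in>X. Q (\<phi> x)}. 1)" by simp
    also have "\<dots> = (\<Sum>y\<in>\<phi> ` {x\<in>X. Q (\<phi> x)}. \<Sum>x\<in>{x' \<in> {x\<in>X. Q (\<phi> x)}. \<phi> x' = y}. 1)"
      by (rule sum.image_gen[OF fS])
    also have "\<dots> = (\<Sum>y\<in>{y \<in> \<phi> ` X. Q y}. c)"
    proof (rule sum.cong)
      show "\<phi> ` {x \<in> X. Q (\<phi> x)} = {y \<in> \<phi> ` X. Q y}" by auto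
    next
      fix y assume y: "y \<in> {y \<in> \<phi> ` X. Q y}"
      have "{x' \<in> {x\<in>X. Q (\<phi> x)}. \<phi> x' = y} = {x\<in>X. \<phi> x = y}" using y by auto
      then show "(\<Sum>x\<in>{x' \<in> {x\<in>X. Q (\<phi> x)}. \<phi> x' = y}. 1) = c"
        using fib y by simp
    qed
    also have "\<dots> = c * card {y \<in> \<phi> ` X. Q y}" by simp
    finally show ?thesis .
  qed
  have e1: "card X = c * card (\<phi> ` X)" using gen[of "\<lambda>_. True"] by simp
  have e2: "card {x\<in>X. P (\<phi> x)} = c * card {y \<in> \<phi> ` X. P y}" by (rule gen)
  show ?thesis unfolding e1 e2 by (simp only: mult_ac)
qed


lemma Aset_zero: "0 \<in> Aset k N"
  by (auto simp: Aset_def words_def)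

lemma Aset_diff: "(A :: nat \<Rightarrow> nat \<Rightarrow> 'g \<Rightarrow> 'f::ab_group_add) \<in> Aset k N \<Longrightarrow> B \<in> Aset k N \<Longrightarrow> A - B \<in> Aset k N"
  by (auto simp: Aset_def words_def)

lemma Aset_add: "(A :: nat \<Rightarrow> nat \<Rightarrow> 'g \<Rightarrow> 'f::ab_group_add) \<in> Aset k N \<Longrightarrow> B \<in> Aset k N \<Longrightarrow> A + B \<in> Aset k N"
  by (auto simp: Aset_def words_def)

lemma phi_diff: "phi k N u (A - B) = phi k N u A - phi k N u B"
proof (rule ext)
  fix j
  show "phi k N u (A - B) j = (phi k N u A - phi k N u B) j"
    by (simp add: phi_def ga_mult_diff_right sum_subtractf)
qed

lemma phi_image:
  assumes u: "u \<in> words k"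
  shows "phi k N u ` Aset k N = vwords (ideal_of k u) N"
proof
  show "phi k N u ` Aset k N \<subseteq> vwords (ideal_of k u) N"
  proof
    fix y assume "y \<in> phi k N u ` Aset k N"
    then obtain A where y: "y = phi k N u A" by blast
    have "y j \<in> ideal_of k u" if "j < N" for j
      using that by (simp add: y phi_def) (rule ideal_ofI, rule refl)
    moreover have "y j = 0" if "N \<le> j" for j using that by (simp add: y phi_def)
    ultimately show "y \<in> vwords (ideal_of k u) N" by (simp add: vwords_def)
  qed
next
  show "vwords (ideal_of k u) N \<subseteq> phi k N u ` Aset k N"
  proof
    fix y assume y: "y \<in> vwords (ideal_of k u) N"
    have ex: "\<exists>a. j < N \<longrightarrow> y j = (\<Sum>i<k. ga_mult (u i) (a i))" for j
    proof (cases "j < N")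
      case True
      then have "y j \<in> ideal_of k u" using y by (simp add: vwords_def)
      then show ?thesis using ideal_ofE by blast
    qed simp
    from ex have "\<forall>j. \<exists>a. j < N \<longrightarrow> y j = (\<Sum>i<k. ga_mult (u i) (a i))" by blast
    then have "\<exists>a. \<forall>j. j < N \<longrightarrow> y j = (\<Sum>i<k. ga_mult (u i) (a j i))"
      by (rule choice)
    then obtain a where a: "\<And>j. j < N \<Longrightarrow> y j = (\<Sum>i<k. ga_mult (u i) (a j i))" by blast
    define A where "A = (\<lambda>i j. if i < k \<and> j < N then a j i else 0)"
    have "A \<in> Aset k N" by (auto simp: A_def Aset_def words_def)
    moreover have "phi k N u A = y"
    proof (rule ext)
      fix j
      show "phi k N u A j = y j"
      proof (cases "j < N")
        case True
        have "phi k N u A j = (\<Sum>i<k. ga_mult (u i) (a j i))"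
          using True by (simp add: phi_def A_def)
        then show ?thesis using a True by simp
      next
        case False
        then show ?thesis using y by (simp add: phi_def vwords_def)
      qed
    qed
    ultimately show "y \<in> phi k N u ` Aset k N" by blast
  qed
qed

lemma cardY:
  fixes I :: "('g::finite \<Rightarrow> 'f::{field,finite}) set"
  assumes info: "\<forall>f. \<exists>x\<in>I. \<forall>s\<in>S. x s = f s"
  shows "real CARD('f) ^ (N * card S) \<le> real (card (vwords I N))"
proof -
  define T where "T = {..<N} \<times> S"
  have finS: "finite S" by simp
  have cT: "card T = N * card S" by (simp add: T_def card_cartesian_product)
  define r where "r = (\<lambda>y::nat \<Rightarrow> 'g \<Rightarrow> 'f. restrict (\<lambda>t. y (fst t) (snd t)) T)"
  have sub: "T \<rightarrow>\<^sub>E (UNIV::'f set) \<subseteq> r ` vwords I N"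
  proof
    fix w assume w: "w \<in> T \<rightarrow>\<^sub>E (UNIV::'f set)"
    define xj where "xj = (\<lambda>j. SOME x. x \<in> I \<and> (\<forall>s\<in>S. x s = w (j, s)))"
    have xj: "xj j \<in> I \<and> (\<forall>s\<in>S. xj j s = w (j, s))" for j
    proof -
      have "\<exists>x. x \<in> I \<and> (\<forall>s\<in>S. x s = w (j, s))" using info[rule_format, of "\<lambda>s. w (j, s)"] by blast
      then show ?thesis unfolding xj_def by (rule someI_ex)
    qed
    define y where "y = (\<lambda>j. if j < N then xj j else 0)"
    have "y \<in> vwords I N" using xj by (auto simp: y_def vwords_def)
    moreover have "r y = w"
    proof (rule ext)
      fix t
      show "r y t = w t"
      proof (cases "t \<in> T")
        case True
        then show ?thesis using xj[of "fst t"] by (auto simp: r_def y_def T_def)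
      next
        case False
        then show ?thesis using w by (cases t) (auto simp: r_def PiE_def extensional_def)
      qed
    qed
    ultimately show "w \<in> r ` vwords I N" by blast
  qed
  have c1: "card (T \<rightarrow>\<^sub>E (UNIV::'f set)) = CARD('f) ^ card T"
    by (simp add: card_PiE T_def)
  have "CARD('f) ^ card T = card (T \<rightarrow>\<^sub>E (UNIV::'f set))" using c1 by simp
  also have "card (T \<rightarrow>\<^sub>E (UNIV::'f set)) \<le> card (r ` vwords I N)"
    by (rule card_mono[OF finite_imageI[OF finite_vwords] sub])
  also have "\<dots> \<le> card (vwords I N)" by (rule card_image_le[OF finite_vwords])
  finally have "CARD('f) ^ (N * card S) \<le> card (vwords I N)" using cT by simp
  then show ?thesis by (metis of_nat_le_iff of_nat_power)
qed

lemma sumcat: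
  fixes I :: "('g::finite \<Rightarrow> 'f::{zero,finite}) set"
  assumes V: "V \<subseteq> vwords I k"
  shows "(\<Sum>u\<in>V. card {y \<in> vwords I N. P (cat k u y)}) \<le> card {x \<in> vwords I (k + N). P x}"
proof -
  have finV: "finite V" using V finite_vwords finite_subset by blast
  define Sg where "Sg = Sigma V (\<lambda>u. {y \<in> vwords I N. P (cat k u y)})"
  have "(\<Sum>u\<in>V. card {y \<in> vwords I N. P (cat k u y)}) = card Sg"
    unfolding Sg_def by (rule card_SigmaI[symmetric]) (auto simp: finV finite_vwords)
  also have "card Sg = card ((\<lambda>p. cat k (fst p) (snd p)) ` Sg)"
  proof (rule card_image[symmetric], rule inj_onI)
    fix p p' assume p: "p \<in> Sg" and p': "p' \<in> Sg" and e: "cat k (fst p) (snd p) = cat k (fst p') (snd p')"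
    have u: "fst p \<in> vwords I k" "fst p' \<in> vwords I k" using p p' V by (auto simp: Sg_def)
    have "fst p j = fst p' j" for j
    proof (cases "j < k")
      case True
      then show ?thesis using fun_cong[OF e, of j] by (simp add: cat_def)
    next
      case False
      then show ?thesis using u by (simp add: vwords_def)
    qed
    moreover have "snd p j = snd p' j" for j
      using fun_cong[OF e, of "j + k"] by (simp add: cat_def)
    ultimately show "p = p'" by (simp add: prod_eq_iff fun_eq_iff)
  qed
  also have "\<dots> \<le> card {x \<in> vwords I (k + N). P x}"
  proof (rule card_mono)
    show "finite {x \<in> vwords I (k + N). P x}" by (rule finite_subset[OF _ finite_vwords]) auto
    show "(\<lambda>p. cat k (fst p) (snd p)) ` Sg \<subseteq> {x \<in> vwords I (k + N). P x}"
    proof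
      fix x assume "x \<in> (\<lambda>p. cat k (fst p) (snd p)) ` Sg"
      then obtain u y where uy: "u \<in> V" "y \<in> vwords I N" "P (cat k u y)" "x = cat k u y"
        by (auto simp: Sg_def)
      have "u \<in> vwords I k" using uy V by auto
      then have "x \<in> vwords I (k + N)" using uy by (auto simp: vwords_def cat_def)
      then show "x \<in> {x \<in> vwords I (k + N). P x}" using uy by simp
    qed
  qed
  finally show ?thesis .
qed


lemma words_nonzero_idx:
  assumes "u \<in> words k" "u \<noteq> 0"
  shows "\<exists>i<k. u i \<noteq> 0"
proof (rule ccontr)
  assume "\<not> (\<exists>i<k. u i \<noteq> 0)"
  then have "u i = 0" for i using assms(1) by (cases "i < k") (auto simp: words_def zero_fun_def)
  then show False using assms(2) by (auto simp: fun_eq_iff zero_fun_def)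
qed

lemma words_in_vwords: "u \<in> words k \<Longrightarrow> u \<in> vwords (ideal_of k u) k"
  by (auto simp: vwords_def words_def ideal_mem zero_fun_def)

lemma vb_pos: "0 < \<delta> \<Longrightarrow> \<delta> < 1 \<Longrightarrow> q > 1 \<Longrightarrow> vb q \<delta> > 0"
  by (simp add: vb_def)

lemma group_bound:
  fixes \<delta> :: real and u0 :: "nat \<Rightarrow> 'g::{ab_group_add,finite} \<Rightarrow> 'f::{field,finite}"
  assumes d0: "0 < \<delta>" and d1: "\<delta> \<le> 1 - 1 / real CARD('f)"
    and X1: "1 \<le> real CARD('f) ^ N * vb (real CARD('f)) \<delta> ^ (k + N)"
    and u0: "u0 \<in> words k" "u0 \<noteq> 0"
    and G: "G \<subseteq> words k" "\<forall>u\<in>G. ideal_of k u = ideal_of k u0"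
  shows "(\<Sum>u\<in>G. real (card {A \<in> (Aset k N :: (nat \<Rightarrow> nat \<Rightarrow> 'g \<Rightarrow> 'f) set).
              real (hweight (k + N) (enc k N A u)) < \<delta> * CARD('g) * (k + N)}))
         * (real CARD('f) ^ N * vb (real CARD('f)) \<delta> ^ (k + N))
         \<le> real (card (Aset k N :: (nat \<Rightarrow> nat \<Rightarrow> 'g \<Rightarrow> 'f) set)) * CARD('g)"
proof -
  define I where "I = ideal_of k u0"
  define n where "n = k + N"
  define q where "q = real CARD('f)"
  define \<beta> where "\<beta> = vb q \<delta>"
  define X where "X = q ^ N * \<beta> ^ n"
  define Aa where "Aa = (Aset k N :: (nat \<Rightarrow> nat \<Rightarrow> 'g \<Rightarrow> 'f) set)"
  define P where "P = (\<lambda>x::nat \<Rightarrow> 'g \<Rightarrow> 'f. real (hweight n x) < \<delta> * CARD('g) * n)"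
  have q1: "q > 1" using card_field_ge2[where 'f='f] by (simp add: q_def)
  have dlt1: "\<delta> < 1"
  proof -
    have "1 / real CARD('f) > 0" using q1 by (simp add: q_def)
    then show ?thesis using d1 by linarith
  qed
  have b0: "\<beta> > 0" unfolding \<beta>_def by (rule vb_pos[OF d0 dlt1 q1])
  have X1': "1 \<le> X" using X1 by (simp add: X_def q_def \<beta>_def n_def)
  have "\<exists>S. (\<forall>f. \<exists>x\<in>I. \<forall>s\<in>S. x s = f s) \<and> (\<forall>x\<in>I. \<forall>y\<in>I. (\<forall>s\<in>S. x s = y s) \<longrightarrow> x = y)"
  proof (rule info_set)
    show "0 \<in> I" unfolding I_def by (rule ideal_zero)
    show "\<forall>x\<in>I. \<forall>y\<in>I. x + y \<in> I" unfolding I_def using ideal_add by blast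
    show "\<forall>x\<in>I. \<forall>s. (\<lambda>z. s * x z) \<in> I" unfolding I_def using ideal_scale by blast
  qed
  then obtain S where info: "\<forall>f. \<exists>x\<in>I. \<forall>s\<in>S. x s = f s"
    and inj: "\<forall>x\<in>I. \<forall>y\<in>I. (\<forall>s\<in>S. x s = y s) \<longrightarrow> x = y"
    by blast
  have shift: "\<forall>x\<in>I. \<forall>g. shiftf g x \<in> I" unfolding I_def using ideal_shift by blast
  have Sne: "S \<noteq> {}"
  proof
    assume "S = {}"
    obtain i where i: "i < k" "u0 i \<noteq> 0" using words_nonzero_idx[OF u0] by blast
    have "u0 i \<in> I" unfolding I_def using ideal_mem[OF i(1)] .
    then have "u0 i = 0" using inj ideal_zero[of k u0] \<open>S = {}\<close> unfolding I_def by blast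
    then show False using i by simp
  qed
  define t where "t = card S"
  have t1: "t \<ge> 1" using Sne by (simp add: t_def card_gt_0_iff Suc_le_eq)
  define Y where "Y = vwords I N"
  have finY: "finite Y" by (simp add: Y_def finite_vwords)
  have cY: "q ^ (N * t) \<le> real (card Y)" unfolding Y_def q_def t_def by (rule cardY[OF info])
  define Low where "Low = {x \<in> vwords I n. real (hweight n x) \<le> \<delta> * CARD('g) * n}"
  have cL: "real (card Low) * \<beta> ^ (n * t) \<le> CARD('g)"
    unfolding Low_def \<beta>_def q_def t_def by (rule lowcount[OF info inj shift d0 d1])
  have finG: "finite G" using G(1) finite_words finite_subset by blast
  have fib: "card {A\<in>Aa. P (enc k N A u)} * card Y = card Aa * card {y \<in> Y. P (cat k u y)}"
    if uG: "u \<in> G" for u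
  proof -
    have uw: "u \<in> words k" using uG G by auto
    have IY: "phi k N u ` Aa = Y"
      unfolding Aa_def Y_def I_def using phi_image[OF uw] G(2) uG by simp
    have "card {A\<in>Aa. (\<lambda>y. P (cat k u y)) (phi k N u A)} * card (phi k N u ` Aa)
          = card Aa * card {y \<in> phi k N u ` Aa. (\<lambda>y. P (cat k u y)) y}"
    proof (rule fiber_card)
      show "finite Aa" by (simp add: Aa_def finite_Aset)
      show "0 \<in> Aa" by (simp add: Aa_def Aset_zero)
      show "\<forall>a\<in>Aa. \<forall>b\<in>Aa. a - b \<in> Aa" by (simp add: Aa_def Aset_diff)
      show "\<forall>a\<in>Aa. \<forall>b\<in>Aa. a + b \<in> Aa" by (simp add: Aa_def Aset_add)
      show "\<forall>a\<in>Aa. \<forall>b\<in>Aa. phi k N u (a - b) = phi k N u a - phi k N u b"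
        using phi_diff by blast
    qed
    then show ?thesis using IY by (simp add: enc_def)
  qed
  have sumc: "(\<Sum>u\<in>G. card {y \<in> Y. P (cat k u y)}) \<le> card Low"
  proof -
    have V: "G \<subseteq> vwords I k"
    proof
      fix u assume uG: "u \<in> G"
      then have "u \<in> vwords (ideal_of k u) k" using G by (intro words_in_vwords) auto
      then show "u \<in> vwords I k" using G(2) uG by (simp add: I_def)
    qed
    have "(\<Sum>u\<in>G. card {y \<in> Y. P (cat k u y)}) \<le> card {x \<in> vwords I (k + N). P x}"
      unfolding Y_def by (rule sumcat[OF V])
    also have "\<dots> \<le> card Low"
      by (rule card_mono) (auto simp: Low_def P_def n_def intro: finite_subset[OF _ finite_vwords])
    finally show ?thesis .
  qed
  have "(\<Sum>u\<in>G. real (card {A\<in>Aa. P (enc k N A u)})) * real (card Y)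
        = (\<Sum>u\<in>G. real (card {A\<in>Aa. P (enc k N A u)} * card Y))"
    by (simp add: sum_distrib_right)
  also have "\<dots> = (\<Sum>u\<in>G. real (card Aa) * real (card {y \<in> Y. P (cat k u y)}))"
    by (rule sum.cong[OF refl]) (simp only: fib of_nat_mult)
  also have "\<dots> = real (card Aa) * real (\<Sum>u\<in>G. card {y \<in> Y. P (cat k u y)})"
    by (simp add: sum_distrib_left)
  also have "\<dots> \<le> real (card Aa) * real (card Low)"
    by (rule mult_left_mono) (use sumc in \<open>simp only: of_nat_le_iff\<close>, simp)
  finally have A1: "(\<Sum>u\<in>G. real (card {A\<in>Aa. P (enc k N A u)})) * real (card Y)
                 \<le> real (card Aa) * real (card Low)" .
  define Sb where "Sb = (\<Sum>u\<in>G. real (card {A\<in>Aa. P (enc k N A u)}))"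
  have Sb0: "Sb \<ge> 0" unfolding Sb_def by (intro sum_nonneg) auto
  have "Sb * X \<le> Sb * X ^ t"
  proof -
    have "X ^ 1 \<le> X ^ t" using X1' t1 by (intro power_increasing) auto
    then have "X \<le> X ^ t" by simp
    then show ?thesis using Sb0 by (intro mult_left_mono) auto
  qed
  also have "X ^ t = q ^ (N * t) * \<beta> ^ (n * t)"
    by (simp add: X_def power_mult_distrib power_mult[symmetric] mult.commute)
  also have "Sb * (q ^ (N * t) * \<beta> ^ (n * t)) \<le> Sb * (real (card Y) * \<beta> ^ (n * t))"
    using cY Sb0 b0 by (intro mult_left_mono mult_right_mono) auto
  also have "\<dots> = (Sb * real (card Y)) * \<beta> ^ (n * t)" by (simp add: mult.assoc)
  also have "\<dots> \<le> (real (card Aa) * real (card Low)) * \<beta> ^ (n * t)"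
    using A1 b0 unfolding Sb_def by (intro mult_right_mono) auto
  also have "\<dots> = real (card Aa) * (real (card Low) * \<beta> ^ (n * t))" by (simp add: mult.assoc)
  also have "\<dots> \<le> real (card Aa) * CARD('g)"
    using cL by (intro mult_left_mono) auto
  finally show ?thesis by (simp add: Sb_def X_def Aa_def P_def n_def q_def \<beta>_def)
qed


lemma exists_good:
  fixes \<delta> :: real
  assumes d0: "0 < \<delta>" and d1: "\<delta> \<le> 1 - 1 / real CARD('f::{field,finite})"
    and X1: "1 \<le> real CARD('f) ^ N * vb (real CARD('f)) \<delta> ^ (k + N)"
    and small: "real (card (Pow (UNIV :: ('g::{ab_group_add,finite} \<Rightarrow> 'f) set))) * CARD('g)
                < real CARD('f) ^ N * vb (real CARD('f)) \<delta> ^ (k + N)"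
  shows "\<exists>A \<in> (Aset k N :: (nat \<Rightarrow> nat \<Rightarrow> 'g \<Rightarrow> 'f) set). \<forall>u \<in> words k. u \<noteq> 0 \<longrightarrow>
           \<delta> * CARD('g) * (k + N) \<le> real (hweight (k + N) (enc k N A u))"
proof -
  define X where "X = real CARD('f) ^ N * vb (real CARD('f)) \<delta> ^ (k + N)"
  define Aa where "Aa = (Aset k N :: (nat \<Rightarrow> nat \<Rightarrow> 'g \<Rightarrow> 'f) set)"
  define U where "U = words k - {0::nat \<Rightarrow> 'g \<Rightarrow> 'f}"
  define bad where "bad = (\<lambda>u. {A \<in> Aa. real (hweight (k + N) (enc k N A u)) < \<delta> * CARD('g) * (k + N)})"
  define K where "K = real (card (Pow (UNIV :: ('g \<Rightarrow> 'f) set)))"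
  have X0: "X > 0" using X1 by (simp add: X_def)
  have finU: "finite U" unfolding U_def using finite_words by blast
  have finAa: "finite Aa" by (simp add: Aa_def finite_Aset)
  have Aa0: "card Aa > 0" using finAa Aset_zero[of k N] by (auto simp: Aa_def card_gt_0_iff)
  have grp: "(\<Sum>u\<in>{u\<in>U. ideal_of k u = I}. real (card (bad u))) * X \<le> real (card Aa) * CARD('g)"
    if I: "I \<in> ideal_of k ` U" for I
  proof -
    obtain u0 where u0: "u0 \<in> U" "I = ideal_of k u0" using I by blast
    show ?thesis unfolding bad_def Aa_def X_def
    proof (rule group_bound[OF d0 d1 X1])
      show "u0 \<in> words k" "u0 \<noteq> 0" using u0 by (auto simp: U_def)
      show "{u \<in> U. ideal_of k u = I} \<subseteq> words k" by (auto simp: U_def)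
      show "\<forall>u\<in>{u \<in> U. ideal_of k u = I}. ideal_of k u = ideal_of k u0" using u0 by auto
    qed
  qed
  have "(\<Sum>u\<in>U. real (card (bad u))) = (\<Sum>I\<in>ideal_of k ` U. \<Sum>u\<in>{u\<in>U. ideal_of k u = I}. real (card (bad u)))"
    by (rule sum.image_gen[OF finU])
  then have "(\<Sum>u\<in>U. real (card (bad u))) * X
        = (\<Sum>I\<in>ideal_of k ` U. (\<Sum>u\<in>{u\<in>U. ideal_of k u = I}. real (card (bad u))) * X)"
    by (simp add: sum_distrib_right)
  also have "\<dots> \<le> (\<Sum>I\<in>ideal_of k ` U. real (card Aa) * CARD('g))"
    by (rule sum_mono) (rule grp)
  also have "\<dots> = real (card (ideal_of k ` U)) * (real (card Aa) * CARD('g))" by simp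
  also have "\<dots> \<le> K * (real (card Aa) * CARD('g))"
  proof -
    have "card (ideal_of k ` U) \<le> card (Pow (UNIV :: ('g \<Rightarrow> 'f) set))"
      by (rule card_mono) auto
    then show ?thesis unfolding K_def by (intro mult_right_mono) auto
  qed
  also have "\<dots> = real (card Aa) * (K * CARD('g))" by (simp add: algebra_simps)
  also have "\<dots> < real (card Aa) * X"
    using small Aa0 by (intro mult_strict_left_mono) (auto simp: K_def X_def)
  finally have "(\<Sum>u\<in>U. real (card (bad u))) < real (card Aa)" using X0 by simp
  moreover have "real (card (\<Union>u\<in>U. bad u)) \<le> (\<Sum>u\<in>U. real (card (bad u)))"
  proof -
    have "card (\<Union>u\<in>U. bad u) \<le> (\<Sum>u\<in>U. card (bad u))" by (rule card_UN_le[OF finU])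
    then show ?thesis by (metis of_nat_le_iff of_nat_sum)
  qed
  ultimately have "card (\<Union>u\<in>U. bad u) < card Aa" by linarith
  then have "Aa \<noteq> (\<Union>u\<in>U. bad u)" by auto
  moreover have "(\<Union>u\<in>U. bad u) \<subseteq> Aa" by (auto simp: bad_def)
  ultimately obtain A where A: "A \<in> Aa" "A \<notin> (\<Union>u\<in>U. bad u)" by blast
  show ?thesis
  proof (rule bexI[of _ A])
    show "A \<in> Aset k N" using A by (simp add: Aa_def)
    show "\<forall>u\<in>words k. u \<noteq> 0 \<longrightarrow> \<delta> * real CARD('g) * real (k + N) \<le> real (hweight (k + N) (enc k N A u))"
      using A by (auto simp: U_def bad_def not_less)
  qed
qed


global_interpretation WS: vector_space "word_scale :: 'f::field \<Rightarrow> (nat \<Rightarrow> 'g \<Rightarrow> 'f) \<Rightarrow> _"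
  by unfold_locales (auto simp: word_scale_def fun_eq_iff algebra_simps)

definition code :: "nat \<Rightarrow> nat \<Rightarrow> (nat \<Rightarrow> nat \<Rightarrow> 'g::{ab_group_add,finite} \<Rightarrow> 'f::field) \<Rightarrow> (nat \<Rightarrow> 'g \<Rightarrow> 'f) set" where
  "code k N A = enc k N A ` words k"

lemma enc_add: "enc k N A (u + v) = enc k N A u + enc k N A v"
  by (auto simp: enc_def cat_def phi_def fun_eq_iff ga_mult_add_left sum.distrib sum_fun_apply)

lemma enc_zero: "enc k N A 0 = 0"
  by (auto simp: enc_def cat_def phi_def fun_eq_iff)

lemma enc_scale: "enc k N A (word_scale s u) = word_scale s (enc k N A u)"
proof -
  have "ga_mult (\<lambda>z. s * u i z) B = (\<lambda>z. s * ga_mult (u i) B z)" for i B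
    by (rule ga_mult_scale_left)
  then show ?thesis
    by (auto simp: enc_def cat_def phi_def fun_eq_iff word_scale_def sum_fun_apply sum_distrib_left)
qed

lemma enc_sum: "enc k N A (\<Sum>p\<in>P. f p) = (\<Sum>p\<in>P. enc k N A (f p))"
proof (induction P rule: infinite_finite_induct)
  case (infinite P)
  then show ?case by (simp only: sum.infinite[OF infinite] enc_zero)
next
  case empty
  then show ?case by (simp only: sum.empty enc_zero)
next
  case (insert x F)
  then show ?case by (simp only: sum.insert[OF insert(1,2)] enc_add)
qed

lemma enc_gmult: "(\<lambda>j. ga_mult a (enc k N A u j)) = enc k N A (\<lambda>j. ga_mult a (u j))"
proof (rule ext)
  fix j
  show "ga_mult a (enc k N A u j) = enc k N A (\<lambda>j. ga_mult a (u j)) j"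
    by (auto simp: enc_def cat_def phi_def ga_mult_sum_right ga_mult_assoc)
qed

lemma enc_words: "u \<in> words k \<Longrightarrow> enc k N A u \<in> words (k + N)"
  by (auto simp: words_def enc_def cat_def phi_def)

lemma quasi_code: "quasi_FG_code (k + N) (code k N A)"
  unfolding quasi_FG_code_def
proof (intro conjI ballI allI)
  show "code k N A \<subseteq> words (k + N)" by (auto simp: code_def enc_words)
  have "(\<lambda>_ _. 0::'b) \<in> words k" by (simp add: words_def)
  then have "enc k N A (\<lambda>_ _. 0) \<in> code k N A" unfolding code_def by (rule imageI)
  moreover have "enc k N A (\<lambda>_ _. 0) = (\<lambda>_ _. 0)" by (auto simp: enc_def cat_def phi_def fun_eq_iff)
  ultimately show "(\<lambda>_ _. 0) \<in> code k N A" by simp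
next
  fix c d assume c: "c \<in> code k N A" and d: "d \<in> code k N A"
  then obtain u v where u: "u \<in> words k" "c = enc k N A u" and v: "v \<in> words k" "d = enc k N A v"
    by (auto simp: code_def)
  have "u + v \<in> words k" using u v by (auto simp: words_def)
  moreover have "(\<lambda>j z. c j z + d j z) = enc k N A (u + v)" by (subst enc_add) (simp add: u v plus_fun_def)
  ultimately show "(\<lambda>j z. c j z + d j z) \<in> code k N A" by (simp add: code_def)
next
  fix a c assume c: "c \<in> code k N A"
  then obtain u where u: "u \<in> words k" "c = enc k N A u" by (auto simp: code_def)
  have "(\<lambda>j. ga_mult a (u j)) \<in> words k" using u by (auto simp: words_def)
  moreover have "(\<lambda>j. ga_mult a (c j)) = enc k N A (\<lambda>j. ga_mult a (u j))" using u by (simp add: enc_gmult)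
  ultimately show "(\<lambda>j. ga_mult a (c j)) \<in> code k N A" by (simp add: code_def)
qed

definition eu :: "nat \<Rightarrow> 'g \<Rightarrow> (nat \<Rightarrow> 'g \<Rightarrow> 'f::field)" where
  "eu i z = (\<lambda>j w. if j = i \<and> w = z then 1 else 0)"

lemma eu_words: "i < k \<Longrightarrow> eu i z \<in> words k"
  by (auto simp: eu_def words_def)

lemma enc_low: "j < k \<Longrightarrow> enc k N A u j = u j"
  by (simp add: enc_def cat_def)

lemma words_expand:
  assumes u: "u \<in> words k"
  shows "u = (\<Sum>p\<in>{..<k} \<times> (UNIV::'g::finite set). word_scale (u (fst p) (snd p)) (eu (fst p) (snd p)))"
proof (rule ext, rule ext)
  fix j w
  have "(\<Sum>p\<in>{..<k} \<times> (UNIV::'g set). word_scale (u (fst p) (snd p)) (eu (fst p) (snd p))) j w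
      = (\<Sum>p\<in>{..<k} \<times> (UNIV::'g set). u (fst p) (snd p) * eu (fst p) (snd p) j w)"
    by (simp add: sum_fun_apply word_scale_def)
  also have "\<dots> = (\<Sum>p\<in>{..<k} \<times> (UNIV::'g set). if p = (j, w) then u j w else 0)"
    by (rule sum.cong) (auto simp: eu_def)
  also have "\<dots> = (if (j, w) \<in> {..<k} \<times> (UNIV::'g set) then u j w else 0)"
    by (rule sum.delta) simp
  also have "\<dots> = (if j < k then u j w else 0)" by simp
  also have "\<dots> = u j w" using u by (auto simp: words_def)
  finally show "u j w = (\<Sum>p\<in>{..<k} \<times> (UNIV::'g set). word_scale (u (fst p) (snd p)) (eu (fst p) (snd p))) j w" by simp
qed

lemma dim_code:
  fixes A :: "nat \<Rightarrow> nat \<Rightarrow> 'g::{ab_group_add,finite} \<Rightarrow> 'f::field"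
  shows "dimF (code k N A) = CARD('g) * k"
proof -
  define b where "b = (\<lambda>p. enc k N A (eu (fst p) (snd p)))"
  define P where "P = {..<k} \<times> (UNIV::'g set)"
  define B where "B = b ` P"
  have finP: "finite P" by (simp add: P_def)
  have bval: "b p j w = (if j = fst p \<and> w = snd p then 1 else 0)" if "j < k" for p j w
    using that by (simp add: b_def enc_low eu_def)
  have injb: "inj_on b P"
  proof (rule inj_onI)
    fix p p' assume p: "p \<in> P" and p': "p' \<in> P" and e: "b p = b p'"
    have "b p (fst p) (snd p) = 1" using p by (simp add: bval P_def mem_Times_iff)
    then have "b p' (fst p) (snd p) = 1" using e by simp
    then show "p = p'" using p by (simp add: bval P_def mem_Times_iff split: if_splits) (simp add: prod_eq_iff)
  qed
  have "card B = card P" unfolding B_def by (rule card_image[OF injb])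
  then have cardB: "card B = CARD('g) * k" by (simp add: P_def card_cartesian_product)
  have BC: "B \<subseteq> code k N A"
    by (auto simp: B_def b_def P_def code_def eu_words mem_Times_iff)
  have CB: "code k N A \<subseteq> WS.span B"
  proof
    fix c assume "c \<in> code k N A"
    then obtain u where u: "u \<in> words k" "c = enc k N A u" by (auto simp: code_def)
    have "c = enc k N A (\<Sum>p\<in>P. word_scale (u (fst p) (snd p)) (eu (fst p) (snd p)))"
      using u words_expand[OF u(1)] by (simp add: P_def)
    also have "\<dots> = (\<Sum>p\<in>P. word_scale (u (fst p) (snd p)) (b p))"
      by (simp add: enc_sum enc_scale b_def)
    also have "\<dots> \<in> WS.span B"
      by (intro WS.span_sum WS.span_scale WS.span_base) (auto simp: B_def)
    finally show "c \<in> WS.span B" .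
  qed
  have indep: "\<not> WS.dependent B"
  proof
    assume "WS.dependent B"
    then obtain cf where cf: "\<exists>v\<in>B. cf v \<noteq> 0" "(\<Sum>v\<in>B. word_scale (cf v) v) = 0"
      using WS.dependent_finite[of B] finP by (auto simp: B_def)
    obtain p0 where p0: "p0 \<in> P" "cf (b p0) \<noteq> 0" using cf(1) by (auto simp: B_def)
    have "0 = (\<Sum>v\<in>B. word_scale (cf v) v) (fst p0) (snd p0)" using cf(2) by simp
    also have "\<dots> = (\<Sum>v\<in>B. cf v * v (fst p0) (snd p0))" by (simp add: sum_fun_apply word_scale_def)
    also have "\<dots> = (\<Sum>p\<in>P. cf (b p) * b p (fst p0) (snd p0))"
      unfolding B_def by (rule sum.reindex[OF injb, unfolded comp_def])
    also have "\<dots> = (\<Sum>p\<in>P. if p = p0 then cf (b p0) else 0)"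
    proof (rule sum.cong[OF refl])
      fix p assume "p \<in> P"
      have "fst p0 < k" using p0 by (simp add: P_def mem_Times_iff)
      then show "cf (b p) * b p (fst p0) (snd p0) = (if p = p0 then cf (b p0) else 0)"
        by (cases p, cases p0) (auto simp: bval)
    qed
    also have "\<dots> = cf (b p0)" using p0 finP by simp
    finally show False using p0 by simp
  qed
  have "WS.dim (code k N A) = CARD('g) * k"
    by (rule WS.dim_unique[OF BC CB indep cardB])
  then show ?thesis by (simp add: dimF_def)
qed


lemma good_code_n:
  fixes \<delta> :: real
  assumes d0: "0 < \<delta>" and d1: "\<delta> \<le> 1 - 1 / real CARD('f::{field,finite})"
    and k1: "1 \<le> k" and kn: "k \<le> n"
    and X1: "1 \<le> real CARD('f) ^ (n - k) * vb (real CARD('f)) \<delta> ^ n"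
    and small: "real (card (Pow (UNIV :: ('g::{ab_group_add,finite} \<Rightarrow> 'f) set))) * CARD('g)
                < real CARD('f) ^ (n - k) * vb (real CARD('f)) \<delta> ^ n"
  shows "\<exists>C :: (nat \<Rightarrow> 'g \<Rightarrow> 'f) set. quasi_FG_code n C \<and> code_rate n C = real k / real n
           \<and> \<delta> \<le> rel_dist n C \<and> rel_dist n C \<le> 1"
proof -
  define N where "N = n - k"
  have nkN: "n = k + N" using kn by (simp add: N_def)
  have X1': "1 \<le> real CARD('f) ^ N * vb (real CARD('f)) \<delta> ^ (k + N)"
    using X1 unfolding nkN[symmetric] unfolding N_def .
  have small': "real (card (Pow (UNIV :: ('g \<Rightarrow> 'f) set))) * CARD('g)
                < real CARD('f) ^ N * vb (real CARD('f)) \<delta> ^ (k + N)"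
    using small unfolding nkN[symmetric] unfolding N_def .
  obtain A where A: "A \<in> (Aset k N :: (nat \<Rightarrow> nat \<Rightarrow> 'g \<Rightarrow> 'f) set)"
    and good: "\<forall>u \<in> words k. u \<noteq> 0 \<longrightarrow> \<delta> * CARD('g) * (k + N) \<le> real (hweight (k + N) (enc k N A u))"
    using exists_good[OF d0 d1 X1' small'] by blast
  define C where "C = code k N A"
  have q: "quasi_FG_code n C" unfolding C_def nkN by (rule quasi_code)
  have m0: "CARD('g) > 0" by simp
  have n0: "n > 0" using k1 kn by simp
  have rate: "code_rate n C = real k / real n"
    using m0 n0 by (simp add: code_rate_def C_def dim_code)
  define W where "W = {hweight n c | c. c \<in> C \<and> c \<noteq> (\<lambda>_ _. 0)}"
  have Wb: "W \<subseteq> {..n * CARD('g)}" unfolding W_def using hweight_le by auto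
  have finW: "finite W" using Wb finite_subset by blast
  have Wne: "W \<noteq> {}"
  proof -
    have "eu 0 0 \<in> words k" using k1 by (intro eu_words) simp
    then have cC: "enc k N A (eu 0 0) \<in> C" unfolding C_def code_def by (rule imageI)
    have "enc k N A (eu 0 0) 0 0 = 1" using k1 by (simp add: enc_low eu_def)
    then have "enc k N A (eu 0 0) \<noteq> (\<lambda>_ _. 0)" by (metis zero_neq_one)
    then show ?thesis using cC unfolding W_def by blast
  qed
  have MinW: "Min W \<in> W" using finW Wne by (rule Min_in)
  then obtain c where c: "c \<in> C" "c \<noteq> (\<lambda>_ _. 0)" "Min W = hweight n c" unfolding W_def by blast
  obtain u where u: "u \<in> words k" "c = enc k N A u" using c(1) by (auto simp: C_def code_def)
  have "u \<noteq> 0"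
  proof
    assume "u = 0"
    then have "c = 0" using u by (simp add: enc_zero)
    then show False using c(2) by (simp add: zero_fun_def)
  qed
  then have "\<delta> * CARD('g) * (k + N) \<le> real (hweight (k + N) (enc k N A u))"
    using good u(1) by blast
  then have lo: "\<delta> * CARD('g) * n \<le> real (Min W)" unfolding c(3) u(2) nkN .
  have hi: "Min W \<le> n * CARD('g)" using MinW Wb by auto
  have mw: "min_weight n C = Min W" by (simp add: min_weight_def W_def)
  have pos: "real CARD('g) * real n > 0" using m0 n0 by simp
  have "\<delta> \<le> rel_dist n C"
    unfolding rel_dist_def mw using lo pos by (simp add: field_simps)
  moreover have "rel_dist n C \<le> 1"
  proof -
    have "real (Min W) \<le> real (n * CARD('g))" using hi by (simp only: of_nat_le_iff)
    then have "real (Min W) \<le> real CARD('g) * real n" by (simp add: mult.commute)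
    then show ?thesis unfolding rel_dist_def mw using pos by (simp add: field_simps)
  qed
  ultimately show ?thesis using q rate by blast
qed

lemma psi_gt1:
  fixes r \<delta> q :: real
  assumes q1: "q > 1" and d0: "0 < \<delta>" and dlt1: "\<delta> < 1"
    and rg: "r < gq q \<delta>"
  shows "q powr (1 - r) * vb q \<delta> > 1"
proof -
  have lq: "ln q > 0" using q1 by simp
  have q1': "q - 1 > 0" using q1 by simp
  have h: "hq q \<delta> = (\<delta> * ln (q - 1) - \<delta> * ln \<delta> - (1 - \<delta>) * ln (1 - \<delta>)) / ln q"
    using d0 dlt1 by (simp add: hq_def xlogx_def log_def diff_divide_distrib)
  then have "ln q * hq q \<delta> = \<delta> * ln (q - 1) - \<delta> * ln \<delta> - (1 - \<delta>) * ln (1 - \<delta>)"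
    using lq by simp
  moreover have "ln (vb q \<delta>) = \<delta> * (ln \<delta> - ln (q - 1)) + (1 - \<delta>) * ln (1 - \<delta>)"
    using d0 dlt1 q1' by (simp add: vb_def ln_mult ln_powr ln_div)
  ultimately have lvb: "ln (vb q \<delta>) = - ln q * hq q \<delta>" by (simp add: algebra_simps)
  have vb0: "vb q \<delta> > 0" using d0 dlt1 q1 by (simp add: vb_def)
  have "ln (q powr (1 - r) * vb q \<delta>) = (1 - r) * ln q + ln (vb q \<delta>)"
    using q1 vb0 by (simp add: ln_mult ln_powr)
  also have "\<dots> = ln q * (gq q \<delta> - r)" using lvb by (simp add: gq_def algebra_simps)
  also have "\<dots> > 0" using lq rg by simp
  finally have "ln (q powr (1 - r) * vb q \<delta>) > 0" .
  moreover have "q powr (1 - r) * vb q \<delta> > 0" using q1 vb0 by simp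
  ultimately show ?thesis using ln_gt_zero_iff by blast
qed


lemma eventually_good:
  fixes r \<delta> :: real
  assumes r: "r \<in> {0<..<1}"
    and d: "\<delta> \<in> {0<..<1 - 1 / real CARD('f::{field,finite})}"
    and rg: "r < gq (real CARD('f)) \<delta>"
  shows "\<exists>n0>0. \<forall>n\<ge>n0. \<exists>C :: (nat \<Rightarrow> 'g::{ab_group_add,finite} \<Rightarrow> 'f) set.
           quasi_FG_code n C \<and> code_rate n C = real (nat \<lfloor>r * n\<rfloor>) / real n
           \<and> \<delta> \<le> rel_dist n C \<and> rel_dist n C \<le> 1"
proof -
  define q where "q = real CARD('f)"
  have q1: "q > 1" using card_field_ge2[where 'f='f] by (simp add: q_def)
  have d0: "0 < \<delta>" and d1: "\<delta> \<le> 1 - 1 / real CARD('f)" using d by auto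
  have dlt1: "\<delta> < 1"
  proof -
    have "1 / real CARD('f) > 0" using q1 by (simp add: q_def)
    moreover have "\<delta> < 1 - 1 / real CARD('f)" using d by simp
    ultimately show ?thesis by linarith
  qed
  define \<beta> where "\<beta> = vb q \<delta>"
  have b0: "\<beta> > 0" unfolding \<beta>_def by (rule vb_pos[OF d0 dlt1 q1])
  define \<psi> where "\<psi> = q powr (1 - r) * \<beta>"
  have psi1: "\<psi> > 1" unfolding \<psi>_def \<beta>_def using psi_gt1[OF q1 d0 dlt1] rg by (simp add: q_def)
  define K where "K = real (card (Pow (UNIV :: ('g \<Rightarrow> 'f) set))) * CARD('g)"
  obtain n1 where n1: "max 1 K < \<psi> ^ n1" using real_arch_pow[OF psi1] by blast
  have r0: "r > 0" and r1: "r < 1" using r by auto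
  define n0 where "n0 = max n1 (nat \<lceil>1 / r\<rceil>) + 1"
  have "\<forall>n\<ge>n0. \<exists>C :: (nat \<Rightarrow> 'g \<Rightarrow> 'f) set.
           quasi_FG_code n C \<and> code_rate n C = real (nat \<lfloor>r * n\<rfloor>) / real n
           \<and> \<delta> \<le> rel_dist n C \<and> rel_dist n C \<le> 1"
  proof (intro allI impI)
    fix n assume nn0: "n0 \<le> n"
    define k where "k = nat \<lfloor>r * n\<rfloor>"
    have "nat \<lceil>1 / r\<rceil> \<le> n" using nn0 unfolding n0_def by arith
    then have "real (nat \<lceil>1 / r\<rceil>) \<le> real n" by (simp only: of_nat_le_iff)
    moreover have "1 / r \<le> real (nat \<lceil>1 / r\<rceil>)" by (rule real_nat_ceiling_ge)
    ultimately have "1 / r \<le> real n" by linarith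
    then have rn1: "1 \<le> r * n" using r0 by (simp add: field_simps)
    have k1: "1 \<le> k" using rn1 by (simp add: k_def le_nat_floor)
    have kr: "real k \<le> r * n" using rn1 by (simp add: k_def)
    have kn: "k \<le> n"
    proof -
      have "r * real n \<le> 1 * real n" using r1 by (intro mult_right_mono) auto
      then have "r * n \<le> n" by simp
      then have "real k \<le> real n" using kr by linarith
      then show ?thesis by simp
    qed
    have "\<psi> ^ n1 \<le> \<psi> ^ n" using psi1 nn0 by (intro power_increasing) (auto simp: n0_def)
    moreover have "\<psi> ^ n \<le> q ^ (n - k) * \<beta> ^ n"
    proof -
      have e: "\<psi> ^ n = (q powr (1 - r)) ^ n * \<beta> ^ n" by (simp add: \<psi>_def power_mult_distrib)
      have "(q powr (1 - r)) ^ n = q powr ((1 - r) * n)"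
        using q1 by (simp add: powr_realpow[symmetric] powr_powr)
      also have "\<dots> \<le> q powr (real (n - k))"
        using q1 kr kn by (intro powr_mono) (auto simp: of_nat_diff algebra_simps)
      also have "\<dots> = q ^ (n - k)" using q1 by (simp add: powr_realpow)
      finally have "(q powr (1 - r)) ^ n \<le> q ^ (n - k)" .
      then show ?thesis unfolding e using b0 by (intro mult_right_mono) auto
    qed
    ultimately have X: "max 1 K < q ^ (n - k) * \<beta> ^ n" using n1 by linarith
    have "\<exists>C :: (nat \<Rightarrow> 'g \<Rightarrow> 'f) set. quasi_FG_code n C \<and> code_rate n C = real k / real n
           \<and> \<delta> \<le> rel_dist n C \<and> rel_dist n C \<le> 1"
      by (rule good_code_n[OF d0 d1 k1 kn]) (use X in \<open>auto simp: q_def \<beta>_def K_def\<close>)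
    then show "\<exists>C :: (nat \<Rightarrow> 'g \<Rightarrow> 'f) set.
           quasi_FG_code n C \<and> code_rate n C = real (nat \<lfloor>r * n\<rfloor>) / real n
           \<and> \<delta> \<le> rel_dist n C \<and> rel_dist n C \<le> 1" by (simp add: k_def)
  qed
  then show ?thesis by (intro exI[of _ n0]) (auto simp: n0_def)
qed

lemma rate_lim:
  fixes r :: real
  assumes r0: "0 < r" and r1: "r < 1" and n0: "n0 > 0"
  shows "(\<lambda>i. real (nat \<lfloor>r * real (i + n0)\<rfloor>) / real (i + n0)) \<longlonglongrightarrow> r"
proof (rule tendsto_sandwich)
  show "eventually (\<lambda>i. r - 1 / real (i + n0) \<le> real (nat \<lfloor>r * real (i + n0)\<rfloor>) / real (i + n0)) sequentially"
  proof (rule always_eventually, rule allI)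
    fix i
    define n where "n = real (i + n0)"
    have npos: "n > 0" using n0 by (simp add: n_def)
    have "r * n - 1 \<le> real (nat \<lfloor>r * n\<rfloor>)"
      using r0 npos by (simp add: of_nat_nat)
    then have "(r * n - 1) / n \<le> real (nat \<lfloor>r * n\<rfloor>) / n" using npos by (intro divide_right_mono) auto
    then show "r - 1 / real (i + n0) \<le> real (nat \<lfloor>r * real (i + n0)\<rfloor>) / real (i + n0)"
      using npos by (simp add: n_def diff_divide_distrib)
  qed
  show "eventually (\<lambda>i. real (nat \<lfloor>r * real (i + n0)\<rfloor>) / real (i + n0) \<le> r) sequentially"
  proof (rule always_eventually, rule allI)
    fix i
    define n where "n = real (i + n0)"
    have npos: "n > 0" using n0 by (simp add: n_def)
    have "real (nat \<lfloor>r * n\<rfloor>) \<le> r * n" using r0 npos by (simp add: of_nat_nat)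
    then have "real (nat \<lfloor>r * n\<rfloor>) / n \<le> r" using npos by (simp add: divide_le_eq mult.commute)
    then show "real (nat \<lfloor>r * real (i + n0)\<rfloor>) / real (i + n0) \<le> r" by (simp add: n_def)
  qed
  have "(\<lambda>i. 1 / real (i + n0)) \<longlonglongrightarrow> 0"
    using LIMSEQ_ignore_initial_segment[OF lim_inverse_n', of n0] by simp
  then show "(\<lambda>i. r - 1 / real (i + n0)) \<longlonglongrightarrow> r"
    using tendsto_diff[OF tendsto_const[of r]] by fastforce
  show "(\<lambda>i. r) \<longlonglongrightarrow> r" by simp
qed

theorem corollary6p2:
  fixes r \<delta> :: real
  assumes "r \<in> {0<..<1}"
    and "\<delta> \<in> {0<..<1 - 1 / real CARD('f::{field,finite})}"
    and "r < gq (real CARD('f)) \<delta>"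
  shows "\<exists>(n :: nat \<Rightarrow> nat) (C :: nat \<Rightarrow> (nat \<Rightarrow> 'g::{ab_group_add,finite} \<Rightarrow> 'f) set).
           (\<forall>i. quasi_FG_code (n i) (C i)) \<and>
           filterlim (\<lambda>i. CARD('g) * n i) at_top sequentially \<and>
           (\<lambda>i. code_rate (n i) (C i)) \<longlonglongrightarrow> r \<and>
           (\<exists>d. (\<lambda>i. rel_dist (n i) (C i)) \<longlonglongrightarrow> d \<and> d \<ge> \<delta>)"
proof -
  obtain n0 where n0: "n0 > 0" and ev: "\<forall>n\<ge>n0. \<exists>C :: (nat \<Rightarrow> 'g \<Rightarrow> 'f) set.
           quasi_FG_code n C \<and> code_rate n C = real (nat \<lfloor>r * n\<rfloor>) / real n
           \<and> \<delta> \<le> rel_dist n C \<and> rel_dist n C \<le> 1"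
    using eventually_good[OF assms] by blast
  define P where "P = (\<lambda>n (C :: (nat \<Rightarrow> 'g \<Rightarrow> 'f) set). quasi_FG_code n C \<and> code_rate n C = real (nat \<lfloor>r * n\<rfloor>) / real n
           \<and> \<delta> \<le> rel_dist n C \<and> rel_dist n C \<le> 1)"
  define nn where "nn = (\<lambda>i::nat. i + n0)"
  define CC where "CC = (\<lambda>i. SOME C. P (nn i) C)"
  have PC: "P (nn i) (CC i)" for i
  proof -
    have "n0 \<le> nn i" by (simp add: nn_def)
    with ev have "\<exists>C. P (nn i) C" unfolding P_def by blast
    then show ?thesis unfolding CC_def by (rule someI_ex)
  qed
  have d0: "\<delta> > 0" using assms(2) by simp
  define f where "f = (\<lambda>i. rel_dist (nn i) (CC i))"
  have fb: "\<delta> \<le> f i \<and> f i \<le> 1" for i using PC[of i] by (simp add: P_def f_def)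
  have "bounded (range f)"
  proof (rule boundedI)
    fix x assume "x \<in> range f"
    then obtain i where "x = f i" by blast
    then show "norm x \<le> 1" using fb[of i] d0 by auto
  qed
  then obtain l \<sigma> where \<sigma>: "strict_mono (\<sigma> :: nat \<Rightarrow> nat)" and lim: "(f \<circ> \<sigma>) \<longlonglongrightarrow> l"
    using bounded_imp_convergent_subsequence by blast
  show ?thesis
  proof (intro exI conjI)
    show "\<forall>i. quasi_FG_code ((nn \<circ> \<sigma>) i) ((CC \<circ> \<sigma>) i)" using PC by (simp add: P_def)
    show "filterlim (\<lambda>i. CARD('g) * (nn \<circ> \<sigma>) i) at_top sequentially"
    proof (rule filterlim_at_top_mono[OF filterlim_ident])
      show "\<forall>\<^sub>F x in sequentially. x \<le> CARD('g) * (nn \<circ> \<sigma>) x"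
      proof (rule always_eventually, rule allI)
        fix x
        have "x \<le> \<sigma> x" using seq_suble[OF \<sigma>] by blast
        also have "\<dots> \<le> nn (\<sigma> x)" by (simp add: nn_def)
        also have "\<dots> \<le> CARD('g) * nn (\<sigma> x)" by simp
        finally show "x \<le> CARD('g) * (nn \<circ> \<sigma>) x" by simp
      qed
    qed
    have rl: "(\<lambda>i. code_rate (nn i) (CC i)) \<longlonglongrightarrow> r"
    proof -
      have "(\<lambda>i. code_rate (nn i) (CC i)) = (\<lambda>i. real (nat \<lfloor>r * real (i + n0)\<rfloor>) / real (i + n0))"
        using PC by (simp add: P_def nn_def fun_eq_iff)
      then show ?thesis using rate_lim[of r n0] assms(1) n0 by simp
    qed
    show "(\<lambda>i. code_rate ((nn \<circ> \<sigma>) i) ((CC \<circ> \<sigma>) i)) \<longlonglongrightarrow> r"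
      using LIMSEQ_subseq_LIMSEQ[OF rl \<sigma>] by (simp add: comp_def)
    show "(\<lambda>i. rel_dist ((nn \<circ> \<sigma>) i) ((CC \<circ> \<sigma>) i)) \<longlonglongrightarrow> l"
      using lim by (simp add: f_def comp_def)
    show "\<delta> \<le> l"
      by (rule LIMSEQ_le_const[OF lim]) (use fb in auto)
  qed
qed

end
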